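(* Let $k\geq 2$ and let $G$ be a finite bipartite graph with $d(G)\geq k$. Then $G$ contains a subgraph $H$, bipartite with vertex classes $A$ and $B$, such that $d(H)\geq k/4$, $d_H(v)\leq k$ for every $v\in A$, and either (1) $|A|\geq k^6|B|$, or (2) $\Delta(H)\leq k^7$.
   Context: $d(F)=2e(F)/|V(F)|$ is the average degree, $d_H(v)$ the degree of $v$ in $H$, and $\Delta(H)$ the maximum degree of $H$. *)

theory Defs
  imports Complex_Main
begin

definition graph :: "'a set \<Rightarrow> 'a set set \<Rightarrow> bool" where
  "graph V E \<longleftrightarrow> finite V \<and> (\<forall>e\<in>E. card e = 2 \<and> e \<subseteq> V)"

definition subgraph :: "'a set \<Rightarrow> 'a set set \<Rightarrow> 'a set \<Rightarrow> 'a set set \<Rightarrow> bool" where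
  "subgraph V' E' V E \<longleftrightarrow> graph V' E' \<and> V' \<subseteq> V \<and> E' \<subseteq> E"

definition bipartite_with :: "'a set \<Rightarrow> 'a set set \<Rightarrow> 'a set \<Rightarrow> 'a set \<Rightarrow> bool" where
  "bipartite_with V E A B \<longleftrightarrow> A \<inter> B = {} \<and> A \<union> B = V \<and>
     (\<forall>e\<in>E. \<exists>a\<in>A. \<exists>b\<in>B. e = {a, b})"

definition bipartite :: "'a set \<Rightarrow> 'a set set \<Rightarrow> bool" where
  "bipartite V E \<longleftrightarrow> (\<exists>A B. bipartite_with V E A B)"

definition avg_degree :: "'a set \<Rightarrow> 'a set set \<Rightarrow> real" where
  "avg_degree V E = 2 * real (card E) / real (card V)"

definition degree :: "'a set set \<Rightarrow> 'a \<Rightarrow> nat" where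
  "degree E v = card {e\<in>E. v \<in> e}"

definition max_degree :: "'a set \<Rightarrow> 'a set set \<Rightarrow> nat" where
  "max_degree V E = Max ({0} \<union> degree E ` V)"

end

theory Submission imports Defs begin

lemma dc:
  assumes "finite S" "finite F" "\<forall>e\<in>F. card (e \<inter> S) = 1"
  shows "card F = (\<Sum>s\<in>S. degree F s)"
proof -
  have eq: "F = (\<Union>s\<in>S. {e\<in>F. s\<in>e})"
  proof
    show "F \<subseteq> (\<Union>s\<in>S. {e\<in>F. s\<in>e})"
    proof
      fix e assume "e \<in> F"
      then have "card (e \<inter> S) = 1" using assms by auto
      then obtain s where "e \<inter> S = {s}" using card_1_singletonE by blast
      then show "e \<in> (\<Union>s\<in>S. {e\<in>F. s\<in>e})" using \<open>e\<in>F\<close> by auto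
    qed
  qed auto
  have "card (\<Union>s\<in>S. {e\<in>F. s\<in>e}) = (\<Sum>s\<in>S. card {e\<in>F. s\<in>e})"
  proof (rule card_UN_disjoint)
    show "finite S" by fact
    show "\<forall>i\<in>S. finite {e \<in> F. i \<in> e}" using assms by auto
    show "\<forall>i\<in>S. \<forall>j\<in>S. i \<noteq> j \<longrightarrow> {e \<in> F. i \<in> e} \<inter> {e \<in> F. j \<in> e} = {}"
    proof (intro ballI impI)
      fix i j assume ij: "i \<in> S" "j \<in> S" "i \<noteq> j"
      show "{e \<in> F. i \<in> e} \<inter> {e \<in> F. j \<in> e} = {}"
      proof (rule ccontr)
        assume "{e \<in> F. i \<in> e} \<inter> {e \<in> F. j \<in> e} \<noteq> {}"
        then obtain e where e: "e \<in> F" "i \<in> e" "j \<in> e" by auto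
        then have "card (e \<inter> S) = 1" using assms by auto
        then obtain s where s: "e \<inter> S = {s}" using card_1_singletonE by blast
        have "i \<in> e \<inter> S" "j \<in> e \<inter> S" using e ij by auto
        then show False using s ij(3) by simp
      qed
    qed
  qed
  then show ?thesis using eq unfolding degree_def by simp
qed

lemma edge_card:
  assumes "X \<inter> Y = {}" "x \<in> X" "y \<in> Y"
  shows "card {x, y} = 2"
proof -
  have "x \<noteq> y" using assms by auto
  then show ?thesis by simp
qed

lemma core:
  fixes k :: real and X Y :: "'a set" and E0 :: "'a set set" and m :: nat
  assumes k: "k \<ge> 2" and fX: "finite X" and fY: "finite Y" and disj: "X \<inter> Y = {}"
    and edges: "\<forall>e\<in>E0. \<exists>x\<in>X. \<exists>y\<in>Y. e = {x, y}"
    and degX: "\<forall>x\<in>X. degree E0 x = m" and m1: "real m \<ge> k/2" and m2: "real m \<le> k"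
    and cXY: "card Y \<le> card X" and Xne: "X \<noteq> {}"
  shows "\<exists>VH EH A B. subgraph VH EH (X \<union> Y) E0 \<and> bipartite_with VH EH A B \<and>
           avg_degree VH EH \<ge> k / 4 \<and> (\<forall>v\<in>A. real (degree EH v) \<le> k) \<and>
           (real (card A) \<ge> k ^ 6 * real (card B) \<or> real (max_degree VH EH) \<le> k ^ 7)"
proof -
  have fE0: "finite E0"
  proof (rule finite_subset)
    show "E0 \<subseteq> Pow (X \<union> Y)"
    proof
      fix e assume "e \<in> E0"
      then obtain x y where "x\<in>X" "y\<in>Y" "e = {x,y}" using edges by blast
      then show "e \<in> Pow (X \<union> Y)" by auto
    qed
    show "finite (Pow (X \<union> Y))" using fX fY by simp
  qed
  have cX0: "card X > 0" using fX Xne by auto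
  have cardE0: "card E0 = m * card X"
  proof -
    have "card E0 = (\<Sum>s\<in>X. degree E0 s)"
    proof (rule dc[OF fX fE0], rule ballI)
      fix e assume "e \<in> E0"
      then obtain x y where "x\<in>X" "y\<in>Y" "e = {x,y}" using edges by blast
      then have "e \<inter> X = {x}" using disj by auto
      then show "card (e \<inter> X) = 1" by simp
    qed
    also have "\<dots> = m * card X" using degX by simp
    finally show ?thesis .
  qed
  define Yh where "Yh = {y\<in>Y. real (degree E0 y) > k^7}"
  define Yl where "Yl = Y - Yh"
  define Fh where "Fh = {e\<in>E0. e \<inter> Yh \<noteq> {}}"
  define Fl where "Fl = {e\<in>E0. e \<inter> Yl \<noteq> {}}"
  have fYh: "finite Yh" "finite Yl" using fY unfolding Yh_def Yl_def by auto
  have E0un: "E0 = Fh \<union> Fl" "Fh \<inter> Fl = {}"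
  proof -
    show "E0 = Fh \<union> Fl"
    proof
      show "E0 \<subseteq> Fh \<union> Fl"
      proof
        fix e assume "e \<in> E0"
        then obtain x y where "x\<in>X" "y\<in>Y" "e = {x,y}" using edges by blast
        then show "e \<in> Fh \<union> Fl" using \<open>e\<in>E0\<close> unfolding Fh_def Fl_def Yl_def by blast
      qed
    qed (auto simp: Fh_def Fl_def)
    show "Fh \<inter> Fl = {}"
    proof (rule ccontr)
      assume "Fh \<inter> Fl \<noteq> {}"
      then obtain e where e: "e \<in> E0" "e \<inter> Yh \<noteq> {}" "e \<inter> Yl \<noteq> {}" unfolding Fh_def Fl_def by auto
      then obtain x y where "x\<in>X" "y\<in>Y" "e = {x,y}" using edges by blast
      then show False using e disj unfolding Yl_def Yh_def by auto
    qed
  qed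
  have fF: "finite Fh" "finite Fl" using fE0 unfolding Fh_def Fl_def by auto
  have cE: "card E0 = card Fh + card Fl" using E0un fF card_Un_disjoint by metis
  have degsub: "degree F v \<le> degree E0 v" if "F \<subseteq> E0" for F v
    unfolding degree_def by (rule card_mono) (use fE0 that in auto)
  have Ydeg: "\<forall>y\<in>Y. real (degree E0 y) \<le> real (card E0)"
    using degsub[of E0] unfolding degree_def by (intro ballI, simp add: card_mono fE0)
  show ?thesis
  proof (cases "2 * card Fh \<ge> card E0")
    case True
    have sg: "subgraph (X \<union> Yh) Fh (X \<union> Y) E0"
      unfolding subgraph_def graph_def
    proof (intro conjI ballI)
      show "finite (X \<union> Yh)" using fX fYh by auto
      show "X \<union> Yh \<subseteq> X \<union> Y" unfolding Yh_def by blast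
      show "Fh \<subseteq> E0" unfolding Fh_def by blast
      fix e assume "e \<in> Fh"
      then have e: "e \<in> E0" "e \<inter> Yh \<noteq> {}" unfolding Fh_def by auto
      then obtain x y where xy: "x\<in>X" "y\<in>Y" "e = {x,y}" using edges by blast
      show "card e = 2" using edge_card[OF disj xy(1,2)] xy(3) by simp
      have "x \<notin> Yh" using disj xy(1) unfolding Yh_def by blast
      then have "y \<in> Yh" using e(2) xy(3) by blast
      then show "e \<subseteq> X \<union> Yh" using xy by blast
    qed
    have bw: "bipartite_with (X \<union> Yh) Fh X Yh"
      unfolding bipartite_with_def
    proof (intro conjI ballI)
      show "X \<inter> Yh = {}" using disj unfolding Yh_def by blast
      show "X \<union> Yh = X \<union> Yh" by (rule refl)
      fix e assume "e \<in> Fh"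
      then have e: "e \<in> E0" "e \<inter> Yh \<noteq> {}" unfolding Fh_def by auto
      then obtain x y where xy: "x\<in>X" "y\<in>Y" "e = {x,y}" using edges by blast
      have "x \<notin> Yh" using disj xy(1) unfolding Yh_def by blast
      then have "y \<in> Yh" using e(2) xy(3) by blast
      then show "\<exists>a\<in>X. \<exists>b\<in>Yh. e = {a, b}" using xy by blast
    qed
    have cFh: "card Fh = (\<Sum>s\<in>Yh. degree E0 s)"
    proof -
      have "card Fh = (\<Sum>s\<in>Yh. degree Fh s)"
      proof (rule dc[OF fYh(1) fF(1)], rule ballI)
        fix e assume "e \<in> Fh"
        then have e: "e \<in> E0" "e \<inter> Yh \<noteq> {}" unfolding Fh_def by auto
        then obtain x y where xy: "x\<in>X" "y\<in>Y" "e = {x,y}" using edges by blast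
        have "x \<notin> Yh" using disj xy(1) unfolding Yh_def by blast
        then have "y \<in> Yh" using e(2) xy(3) by blast
        then have "e \<inter> Yh = {y}" using xy(3) \<open>x \<notin> Yh\<close> by blast
        then show "card (e \<inter> Yh) = 1" by simp
      qed
      also have "\<dots> = (\<Sum>s\<in>Yh. degree E0 s)"
      proof (rule sum.cong[OF refl])
        fix s assume "s \<in> Yh"
        then have "{e\<in>Fh. s\<in>e} = {e\<in>E0. s\<in>e}" unfolding Fh_def by blast
        then show "degree Fh s = degree E0 s" unfolding degree_def by simp
      qed
      finally show ?thesis .
    qed
    have "real (card Yh) * k^7 \<le> (\<Sum>s\<in>Yh. real (degree E0 s))"
      by (rule sum_bounded_below) (auto simp: Yh_def)
    also have "\<dots> = real (card Fh)" using cFh by simp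
    also have "\<dots> \<le> real (card E0)" using cE by simp
    also have "\<dots> = real m * real (card X)" using cardE0 by simp
    also have "\<dots> \<le> k * real (card X)" using m2 by (simp add: mult_right_mono)
    finally have h1: "real (card Yh) * k^7 \<le> k * real (card X)" .
    have h2: "k^6 * real (card Yh) \<le> real (card X)"
    proof -
      have p7: "k^7 = k * k^6" by algebra
      have "k * (k^6 * real (card Yh)) \<le> k * real (card X)" using h1 unfolding p7 by (simp add: algebra_simps)
      then show ?thesis using k by simp
    qed
    have k6: "k^6 \<ge> 1" using k by (simp add: one_le_power)
    have h3: "real (card Yh) \<le> real (card X)"
    proof -
      have "1 * real (card Yh) \<le> k^6 * real (card Yh)" by (rule mult_right_mono[OF k6]) simp
      then show ?thesis using h2 by linarith
    qed
    have cV: "card (X \<union> Yh) = card X + card Yh"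
      using card_Un_disjoint fX fYh disj unfolding Yh_def by blast
    have r1: "2 * real (card Fh) \<ge> real m * real (card X)"
    proof -
      have "2 * card Fh \<ge> m * card X" using True cardE0 by simp
      then show ?thesis by (metis of_nat_le_iff of_nat_mult of_nat_numeral)
    qed
    have r2: "real m * real (card X) \<ge> k/2 * real (card X)" using mult_right_mono[OF m1, of "real (card X)"] by simp
    have r3: "k/4 * (real (card X) + real (card Yh)) \<le> k/4 * (2 * real (card X))"
      using h3 k by (intro mult_left_mono) auto
    have avg: "avg_degree (X \<union> Yh) Fh \<ge> k/4"
    proof -
      have pos: "real (card X + card Yh) > 0" using cX0 by simp
      have "k/4 * real (card X + card Yh) \<le> 2 * real (card Fh)" using r1 r2 r3 by simp
      then show ?thesis unfolding avg_degree_def cV using pos by (simp add: pos_le_divide_eq)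
    qed
    have dA: "\<forall>v\<in>X. real (degree Fh v) \<le> k"
    proof
      fix v assume "v \<in> X"
      have "degree Fh v \<le> degree E0 v" using degsub[of Fh] unfolding Fh_def by blast
      then have "degree Fh v \<le> m" using degX \<open>v\<in>X\<close> by simp
      then show "real (degree Fh v) \<le> k" using m2 by linarith
    qed
    show ?thesis using sg bw avg h2 dA by blast
  next
    case False
    have h2Fl: "2 * card Fl \<ge> card E0" using False cE by linarith
    have sg: "subgraph (X \<union> Yl) Fl (X \<union> Y) E0"
      unfolding subgraph_def graph_def
    proof (intro conjI ballI)
      show "finite (X \<union> Yl)" using fX fYh by auto
      show "X \<union> Yl \<subseteq> X \<union> Y" unfolding Yl_def by blast
      show "Fl \<subseteq> E0" unfolding Fl_def by blast
      fix e assume "e \<in> Fl"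
      then have e: "e \<in> E0" "e \<inter> Yl \<noteq> {}" unfolding Fl_def by auto
      then obtain x y where xy: "x\<in>X" "y\<in>Y" "e = {x,y}" using edges by blast
      show "card e = 2" using edge_card[OF disj xy(1,2)] xy(3) by simp
      have "x \<notin> Yl" using disj xy(1) unfolding Yl_def by blast
      then have "y \<in> Yl" using e(2) xy(3) by blast
      then show "e \<subseteq> X \<union> Yl" using xy by blast
    qed
    have bw: "bipartite_with (X \<union> Yl) Fl X Yl"
      unfolding bipartite_with_def
    proof (intro conjI ballI)
      show "X \<inter> Yl = {}" using disj unfolding Yl_def by blast
      show "X \<union> Yl = X \<union> Yl" by (rule refl)
      fix e assume "e \<in> Fl"
      then have e: "e \<in> E0" "e \<inter> Yl \<noteq> {}" unfolding Fl_def by auto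
      then obtain x y where xy: "x\<in>X" "y\<in>Y" "e = {x,y}" using edges by blast
      have "x \<notin> Yl" using disj xy(1) unfolding Yl_def by blast
      then have "y \<in> Yl" using e(2) xy(3) by blast
      then show "\<exists>a\<in>X. \<exists>b\<in>Yl. e = {a, b}" using xy by blast
    qed
    have cV: "card (X \<union> Yl) = card X + card Yl"
      using card_Un_disjoint fX fYh disj unfolding Yl_def by blast
    have h3: "card Yl \<le> card X"
    proof -
      have "card Yl \<le> card Y" unfolding Yl_def using fY by (simp add: card_mono)
      then show ?thesis using cXY by linarith
    qed
    have r1: "2 * real (card Fl) \<ge> real m * real (card X)"
    proof -
      have "2 * card Fl \<ge> m * card X" using h2Fl cardE0 by simp
      then show ?thesis by (metis of_nat_le_iff of_nat_mult of_nat_numeral)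
    qed
    have r2: "real m * real (card X) \<ge> k/2 * real (card X)" using mult_right_mono[OF m1, of "real (card X)"] by simp
    have r3: "k/4 * (real (card X) + real (card Yl)) \<le> k/4 * (2 * real (card X))"
      using h3 k by (intro mult_left_mono) auto
    have avg: "avg_degree (X \<union> Yl) Fl \<ge> k/4"
    proof -
      have pos: "real (card X + card Yl) > 0" using cX0 by simp
      have "k/4 * real (card X + card Yl) \<le> 2 * real (card Fl)" using r1 r2 r3 by simp
      then show ?thesis unfolding avg_degree_def cV using pos by (simp add: pos_le_divide_eq)
    qed
    have dA: "\<forall>v\<in>X. real (degree Fl v) \<le> k"
    proof
      fix v assume "v \<in> X"
      have "degree Fl v \<le> degree E0 v" using degsub[of Fl] unfolding Fl_def by blast
      then have "degree Fl v \<le> m" using degX \<open>v\<in>X\<close> by simp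
      then show "real (degree Fl v) \<le> k" using m2 by linarith
    qed
    have kk: "k \<le> k^7"
    proof -
      have "k^1 \<le> k^7" by (rule power_increasing) (use k in auto)
      then show ?thesis by simp
    qed
    have md: "real (max_degree (X \<union> Yl) Fl) \<le> k^7"
    proof -
      let ?S = "{0} \<union> degree Fl ` (X \<union> Yl)"
      have fS: "finite ?S" using fX fYh by auto
      have "Max ?S \<in> ?S" by (rule Max_in[OF fS]) simp
      moreover have "\<forall>s\<in>?S. real s \<le> k^7"
      proof
        fix s assume "s \<in> ?S"
        then consider "s = 0" | v where "v \<in> X" "s = degree Fl v" | v where "v \<in> Yl" "s = degree Fl v" by blast
        then show "real s \<le> k^7"
        proof cases
          case 1 then show ?thesis using k by simp
        next
          case 2 then show ?thesis using dA kk by fastforce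
        next
          case 3
          have "degree Fl v \<le> degree E0 v" using degsub[of Fl] unfolding Fl_def by blast
          moreover have "\<not> real (degree E0 v) > k^7" using 3(1) unfolding Yl_def Yh_def by blast
          ultimately show ?thesis using 3(2) by linarith
        qed
      qed
      ultimately show ?thesis unfolding max_degree_def by blast
    qed
    show ?thesis using sg bw avg dA md by blast
  qed
qed


lemma sgtrans:
  assumes "subgraph VH EH V' E'" "V' \<subseteq> V" "E' \<subseteq> E"
  shows "subgraph VH EH V E"
  using assms unfolding subgraph_def by blast

lemma mindeg:
  fixes k :: real
  assumes k: "k > 0" and g: "graph V E" and avg: "avg_degree V E \<ge> k"
  shows "\<exists>W. W \<subseteq> V \<and> W \<noteq> {} \<and> (\<forall>w\<in>W. real (degree {e\<in>E. e \<subseteq> W} w) > k/2)"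
proof -
  have fV: "finite V" using g unfolding graph_def by blast
  have EV: "E \<subseteq> Pow V" using g unfolding graph_def by blast
  have fE: "finite E" using finite_subset[OF EV] fV by simp
  define P where "P W \<longleftrightarrow> W \<subseteq> V \<and> W \<noteq> {} \<and> real (card {e\<in>E. e\<subseteq>W}) \<ge> k/2 * real (card W)" for W
  have Vne: "V \<noteq> {}"
  proof
    assume "V = {}"
    then have "avg_degree V E = 0" unfolding avg_degree_def by simp
    then show False using avg k by simp
  qed
  have cV: "real (card V) > 0" using Vne fV by (simp add: card_gt_0_iff)
  have "{e\<in>E. e\<subseteq>V} = E" using EV by blast
  moreover have "k * real (card V) \<le> 2 * real (card E)"
    using avg cV unfolding avg_degree_def by (simp add: pos_le_divide_eq)
  ultimately have "P V" unfolding P_def using Vne by simp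
  then obtain W where PW: "P W" and minW: "\<forall>W'. P W' \<longrightarrow> card W \<le> card W'"
    using ex_has_least_nat[of P V card] by blast
  have WV: "W \<subseteq> V" and Wne: "W \<noteq> {}" and cW: "real (card {e\<in>E. e\<subseteq>W}) \<ge> k/2 * real (card W)"
    using PW unfolding P_def by auto
  have fW: "finite W" using finite_subset[OF WV fV] .
  have "\<forall>w\<in>W. real (degree {e\<in>E. e \<subseteq> W} w) > k/2"
  proof
    fix w assume wW: "w \<in> W"
    define EW where "EW = {e\<in>E. e\<subseteq>W}"
    define EW' where "EW' = {e\<in>E. e\<subseteq>W - {w}}"
    define D where "D = {e\<in>EW. w\<in>e}"
    have fEW: "finite EW" "finite EW'" "finite D" using fE unfolding EW_def EW'_def D_def by auto
    have un: "EW = EW' \<union> D" unfolding EW_def EW'_def D_def by blast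
    have dj: "EW' \<inter> D = {}" unfolding EW'_def D_def by blast
    have cEW: "card EW = card EW' + card D" using un dj fEW card_Un_disjoint by metis
    show "real (degree {e\<in>E. e \<subseteq> W} w) > k/2"
    proof (cases "W - {w} = {}")
      case True
      then have Ww: "W = {w}" using wW by blast
      have "EW = {}"
      proof (rule ccontr)
        assume "EW \<noteq> {}"
        then obtain e where e: "e \<in> E" "e \<subseteq> {w}" unfolding EW_def Ww by blast
        have "card e \<le> card {w}" by (rule card_mono) (use e in simp_all)
        moreover have "card e = 2" using g e unfolding graph_def by blast
        ultimately show False by simp
      qed
      moreover have "real (card EW) \<ge> k/2 * real (card W)" using cW unfolding EW_def .
      ultimately have False using k Ww by simp
      then show ?thesis ..
    next
      case False
      have "card (W - {w}) < card W" using fW wW by (meson card_Diff1_less)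
      then have "\<not> P (W - {w})" using minW by fastforce
      then have lt: "real (card EW') < k/2 * real (card (W - {w}))"
        unfolding P_def EW'_def using False WV by auto
      have cWw: "real (card (W - {w})) = real (card W) - 1" proof -
        have "card W \<ge> 1" using fW wW by (metis One_nat_def Suc_leI card_gt_0_iff empty_iff)
        then show ?thesis using fW wW by (simp add: of_nat_diff)
      qed
      have eqk: "k/2 * real (card (W - {w})) = k/2 * real (card W) - k/2"
        unfolding cWw by (simp add: right_diff_distrib)
      have cW': "real (card EW) \<ge> k/2 * real (card W)" using cW unfolding EW_def .
      have "real (card EW) = real (card EW') + real (card D)" using cEW by simp
      then have "real (card D) > k/2" using lt cW' eqk by linarith
      moreover have "degree {e\<in>E. e \<subseteq> W} w = card D" unfolding degree_def D_def EW_def by simp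
      ultimately show ?thesis by simp
    qed
  qed
  then show ?thesis using WV Wne by blast
qed

lemma build:
  fixes k :: real and X Y :: "'a set" and E1 :: "'a set set"
  assumes k: "k \<ge> 2" and fX: "finite X" and fY: "finite Y" and disj: "X \<inter> Y = {}"
    and edges: "\<forall>e\<in>E1. \<exists>x\<in>X. \<exists>y\<in>Y. e = {x, y}"
    and degX: "\<forall>x\<in>X. real (degree E1 x) > k/2"
    and cXY: "card Y \<le> card X" and Xne: "X \<noteq> {}"
  shows "\<exists>VH EH A B. subgraph VH EH (X \<union> Y) E1 \<and> bipartite_with VH EH A B \<and>
           avg_degree VH EH \<ge> k / 4 \<and> (\<forall>v\<in>A. real (degree EH v) \<le> k) \<and>
           (real (card A) \<ge> k ^ 6 * real (card B) \<or> real (max_degree VH EH) \<le> k ^ 7)"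
proof -
  define m where "m = nat \<lceil>k/2\<rceil>"
  have c0: "\<lceil>k/2\<rceil> \<ge> 0" using k by simp
  have rm: "real m = of_int \<lceil>k/2\<rceil>" unfolding m_def using c0 by simp
  have m1: "real m \<ge> k/2" unfolding rm by (rule le_of_int_ceiling)
  have m2: "real m \<le> k"
  proof -
    have "of_int \<lceil>k/2\<rceil> \<le> k/2 + (1::real)" by (rule of_int_ceiling_le_add_one)
    then show ?thesis unfolding rm using k by linarith
  qed
  have ex: "\<forall>x\<in>X. \<exists>S. S \<subseteq> {e\<in>E1. x\<in>e} \<and> card S = m"
  proof
    fix x assume "x \<in> X"
    then have "real (degree E1 x) > k/2" using degX by blast
    then have "\<lceil>k/2\<rceil> \<le> int (degree E1 x)" by (simp add: ceiling_le_iff)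
    then have "m \<le> degree E1 x" unfolding m_def by (simp add: nat_le_iff)
    then show "\<exists>S. S \<subseteq> {e\<in>E1. x\<in>e} \<and> card S = m"
      unfolding degree_def by (meson obtain_subset_with_card_n)
  qed
  then obtain S where S: "\<forall>x\<in>X. S x \<subseteq> {e\<in>E1. x\<in>e} \<and> card (S x) = m"
    using bchoice[OF ex] by blast
  define E0 where "E0 = (\<Union>x\<in>X. S x)"
  have E01: "E0 \<subseteq> E1" unfolding E0_def using S by blast
  have edges0: "\<forall>e\<in>E0. \<exists>x\<in>X. \<exists>y\<in>Y. e = {x, y}" using E01 edges by blast
  have degX0: "\<forall>x\<in>X. degree E0 x = m"
  proof
    fix x assume xX: "x \<in> X"
    have "{e\<in>E0. x\<in>e} = S x"
    proof
      show "S x \<subseteq> {e\<in>E0. x\<in>e}" using S xX unfolding E0_def by blast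
      show "{e\<in>E0. x\<in>e} \<subseteq> S x"
      proof
        fix e assume "e \<in> {e\<in>E0. x\<in>e}"
        then obtain x' where x': "x' \<in> X" "e \<in> S x'" "x \<in> e" unfolding E0_def by blast
        then have "e \<in> E1" "x' \<in> e" using S by auto
        then obtain a b where ab: "a\<in>X" "b\<in>Y" "e = {a,b}" using edges by blast
        have "x = a" using ab x' xX disj by blast
        moreover have "x' = a" using ab \<open>x' \<in> e\<close> x'(1) disj by blast
        ultimately show "e \<in> S x" using x' by simp
      qed
    qed
    then show "degree E0 x = m" unfolding degree_def using S xX by simp
  qed
  from core[OF k fX fY disj edges0 degX0 m1 m2 cXY Xne]
  show ?thesis using sgtrans[OF _ subset_refl E01] by blast
qed

theorem lemma8:
  fixes k :: real and V :: "'a set" and E :: "'a set set"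
  assumes "k \<ge> 2" and "graph V E" and "bipartite V E" and "avg_degree V E \<ge> k"
  shows "\<exists>VH EH A B. subgraph VH EH V E \<and> bipartite_with VH EH A B \<and>
           avg_degree VH EH \<ge> k / 4 \<and> (\<forall>v\<in>A. real (degree EH v) \<le> k) \<and>
           (real (card A) \<ge> k ^ 6 * real (card B) \<or> real (max_degree VH EH) \<le> k ^ 7)"
proof -
  obtain A B where bw: "bipartite_with V E A B" using assms(3) unfolding bipartite_def by blast
  have kpos: "k > 0" using assms(1) by simp
  obtain W where WV: "W \<subseteq> V" and Wne: "W \<noteq> {}"
    and dW: "\<forall>w\<in>W. real (degree {e\<in>E. e \<subseteq> W} w) > k/2"
    using mindeg[OF kpos assms(2) assms(4)] by blast
  define E1 where "E1 = {e\<in>E. e \<subseteq> W}"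
  define A1 where "A1 = A \<inter> W"
  define B1 where "B1 = B \<inter> W"
  have fV: "finite V" using assms(2) unfolding graph_def by blast
  have fW: "finite W" using finite_subset[OF WV fV] .
  have fA1: "finite A1" "finite B1" unfolding A1_def B1_def using fW by auto
  have dj: "A1 \<inter> B1 = {}" using bw unfolding A1_def B1_def bipartite_with_def by blast
  have WAB: "A1 \<union> B1 = W" using bw WV unfolding A1_def B1_def bipartite_with_def by blast
  have E1E: "E1 \<subseteq> E" unfolding E1_def by blast
  have ed: "\<forall>e\<in>E1. \<exists>x\<in>A1. \<exists>y\<in>B1. e = {x, y}"
  proof
    fix e assume "e \<in> E1"
    then have "e \<in> E" "e \<subseteq> W" unfolding E1_def by auto
    then obtain a b where "a\<in>A" "b\<in>B" "e = {a,b}" using bw unfolding bipartite_with_def by blast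
    then show "\<exists>x\<in>A1. \<exists>y\<in>B1. e = {x, y}" using \<open>e \<subseteq> W\<close> unfolding A1_def B1_def by blast
  qed
  have ed': "\<forall>e\<in>E1. \<exists>x\<in>B1. \<exists>y\<in>A1. e = {x, y}"
  proof
    fix e assume "e \<in> E1"
    then obtain x y where "x\<in>A1" "y\<in>B1" "e = {x, y}" using ed by blast
    then show "\<exists>x\<in>B1. \<exists>y\<in>A1. e = {x, y}" by (blast intro: insert_commute)
  qed
  have dA: "\<forall>x\<in>A1. real (degree E1 x) > k/2" "\<forall>x\<in>B1. real (degree E1 x) > k/2"
    using dW unfolding E1_def A1_def B1_def by auto
  show ?thesis
  proof (cases "card B1 \<le> card A1")
    case True
    have "A1 \<noteq> {}"
    proof
      assume "A1 = {}"
      then have "B1 = {}" using True fA1 by simp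
      then show False using \<open>A1 = {}\<close> WAB Wne by simp
    qed
    from build[OF assms(1) fA1(1) fA1(2) dj ed dA(1) True this]
    obtain VH EH A' B' where "subgraph VH EH (A1 \<union> B1) E1 \<and> bipartite_with VH EH A' B' \<and>
           avg_degree VH EH \<ge> k / 4 \<and> (\<forall>v\<in>A'. real (degree EH v) \<le> k) \<and>
           (real (card A') \<ge> k ^ 6 * real (card B') \<or> real (max_degree VH EH) \<le> k ^ 7)" by blast
    moreover have "subgraph VH EH V E" using sgtrans[OF _ _ E1E, of VH EH "A1 \<union> B1" V] calculation WAB WV by simp
    ultimately show ?thesis by blast
  next
    case False
    then have c: "card A1 \<le> card B1" by simp
    have B1ne: "B1 \<noteq> {}" using False by auto
    have dj': "B1 \<inter> A1 = {}" using dj by blast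
    from build[OF assms(1) fA1(2) fA1(1) dj' ed' dA(2) c B1ne]
    obtain VH EH A' B' where "subgraph VH EH (B1 \<union> A1) E1 \<and> bipartite_with VH EH A' B' \<and>
           avg_degree VH EH \<ge> k / 4 \<and> (\<forall>v\<in>A'. real (degree EH v) \<le> k) \<and>
           (real (card A') \<ge> k ^ 6 * real (card B') \<or> real (max_degree VH EH) \<le> k ^ 7)" by blast
    moreover have "B1 \<union> A1 \<subseteq> V" using WAB WV by blast
    moreover have "subgraph VH EH V E" using sgtrans[OF _ _ E1E, of VH EH "B1 \<union> A1" V] calculation by simp
    ultimately show ?thesis by blast
  qed
qed

end
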